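(* Let $R$ be a commutative ring and $S$ a multiplicative subset of $R$. If $R$ is a $u$-$S$-coherent ring with respect to some $s\in S$, then the localization $R_s=R[1/s]$ is a coherent ring.
   Context: An $R$-module $M$ is $u$-$S$-finitely presented with respect to $s\in S$ if there is an exact sequence $0\to T_1\to F\to M\to T_2\to 0$ with $F$ finitely presented and $sT_1=sT_2=0$. $R$ is a $u$-$S$-coherent ring with respect to $s\in S$ if every finitely generated ideal of $R$ is $u$-$S$-finitely presented with respect to $s$. *)

theory Defs
  imports "HOL-Algebra.Algebra"
begin

text \<open>Elements of the free module R^n are represented as functions nat => 'a whose
  entries below n lie in the carrier and which vanish from n on.\<close>

definition vecs :: "('a, 'b) ring_scheme \<Rightarrow> nat \<Rightarrow> (nat \<Rightarrow> 'a) set" where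
  "vecs R n = {x. (\<forall>i<n. x i \<in> carrier R) \<and> (\<forall>i\<ge>n. x i = \<zero>\<^bsub>R\<^esub>)}"

definition lin_comb :: "('a, 'b) ring_scheme \<Rightarrow> nat \<Rightarrow> (nat \<Rightarrow> 'a) \<Rightarrow> (nat \<Rightarrow> 'a) \<Rightarrow> 'a" where
  "lin_comb R n x a = (\<Oplus>\<^bsub>R\<^esub> i\<in>{..<n}. x i \<otimes>\<^bsub>R\<^esub> a i)"

definition vsmult :: "('a, 'b) ring_scheme \<Rightarrow> nat \<Rightarrow> 'a \<Rightarrow> (nat \<Rightarrow> 'a) \<Rightarrow> (nat \<Rightarrow> 'a)" where
  "vsmult R n r x = (\<lambda>i. if i < n then r \<otimes>\<^bsub>R\<^esub> x i else \<zero>\<^bsub>R\<^esub>)"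

definition vspan :: "('a, 'b) ring_scheme \<Rightarrow> nat \<Rightarrow> nat \<Rightarrow> (nat \<Rightarrow> nat \<Rightarrow> 'a) \<Rightarrow> (nat \<Rightarrow> 'a) set" where
  "vspan R n m v = {y. \<exists>c. (\<forall>j<m. c j \<in> carrier R) \<and>
          y = (\<lambda>i. if i < n then (\<Oplus>\<^bsub>R\<^esub> j\<in>{..<m}. c j \<otimes>\<^bsub>R\<^esub> v j i) else \<zero>\<^bsub>R\<^esub>)}"

definition fg_submodule :: "('a, 'b) ring_scheme \<Rightarrow> nat \<Rightarrow> (nat \<Rightarrow> 'a) set \<Rightarrow> bool" where
  "fg_submodule R n K \<longleftrightarrow> (\<exists>m v. (\<forall>j<m. v j \<in> vecs R n) \<and> K = vspan R n m v)"

text \<open>An ideal I is finitely presented: there is an exact sequence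
  F_1 -> R^n -> I -> 0 with F_1 finitely generated free, i.e. a surjection
  R^n -> I (given by generators a) whose kernel (the syzygies) is finitely generated.\<close>
definition fp_ideal :: "('a, 'b) ring_scheme \<Rightarrow> 'a set \<Rightarrow> bool" where
  "fp_ideal R I \<longleftrightarrow>
     (\<exists>n a. (\<forall>i<n. a i \<in> carrier R)
        \<and> I = {y. \<exists>x\<in>vecs R n. y = lin_comb R n x a}
        \<and> fg_submodule R n {x \<in> vecs R n. lin_comb R n x a = \<zero>\<^bsub>R\<^esub>})"

definition coherent_ring :: "('a, 'b) ring_scheme \<Rightarrow> bool" where
  "coherent_ring R \<longleftrightarrow>
     (\<forall>A. finite A \<and> A \<subseteq> carrier R \<longrightarrow> fp_ideal R (Idl\<^bsub>R\<^esub> A))"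

text \<open>I is u-S-finitely presented w.r.t. s: there is an exact sequence
  0 -> T_1 -> F -> I -> T_2 -> 0 with F finitely presented and s T_1 = s T_2 = 0.
  We write F = R^n / K with K a finitely generated submodule of R^n (every finitely
  presented module has this form); the map F -> I is induced by the map
  R^n -> R, x |-> sum x_i b_i, which vanishes on K and takes values in I.
  Then T_1 is the kernel {x. sum x_i b_i = 0} / K and T_2 = I / image.\<close>
definition u_S_fp_ideal :: "('a, 'b) ring_scheme \<Rightarrow> 'a \<Rightarrow> 'a set \<Rightarrow> bool" where
  "u_S_fp_ideal R s I \<longleftrightarrow>
     (\<exists>n K b. fg_submodule R n K
        \<and> (\<forall>i<n. b i \<in> carrier R)
        \<and> (\<forall>x\<in>K. lin_comb R n x b = \<zero>\<^bsub>R\<^esub>)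
        \<and> (\<forall>x\<in>vecs R n. lin_comb R n x b \<in> I)
        \<and> (\<forall>x\<in>vecs R n. lin_comb R n x b = \<zero>\<^bsub>R\<^esub> \<longrightarrow> vsmult R n s x \<in> K)
        \<and> (\<forall>y\<in>I. \<exists>x\<in>vecs R n. s \<otimes>\<^bsub>R\<^esub> y = lin_comb R n x b))"

definition u_S_coherent :: "('a, 'b) ring_scheme \<Rightarrow> 'a \<Rightarrow> bool" where
  "u_S_coherent R s \<longleftrightarrow>
     (\<forall>A. finite A \<and> A \<subseteq> carrier R \<longrightarrow> u_S_fp_ideal R s (Idl\<^bsub>R\<^esub> A))"

definition multiplicative_subset :: "('a, 'b) ring_scheme \<Rightarrow> 'a set \<Rightarrow> bool" where
  "multiplicative_subset R S \<longleftrightarrow> S \<subseteq> carrier R \<and> \<one>\<^bsub>R\<^esub> \<in> S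
     \<and> (\<forall>x\<in>S. \<forall>y\<in>S. x \<otimes>\<^bsub>R\<^esub> y \<in> S)"

text \<open>A pair (a, m) represents the fraction a / s^m.\<close>
definition loc_rel :: "('a, 'b) ring_scheme \<Rightarrow> 'a \<Rightarrow> (('a \<times> nat) \<times> ('a \<times> nat)) set" where
  "loc_rel R s = {((a, m), (b, k)). a \<in> carrier R \<and> b \<in> carrier R \<and>
     (\<exists>t::nat. s [^]\<^bsub>R\<^esub> t \<otimes>\<^bsub>R\<^esub>
        (a \<otimes>\<^bsub>R\<^esub> s [^]\<^bsub>R\<^esub> k \<ominus>\<^bsub>R\<^esub> b \<otimes>\<^bsub>R\<^esub> s [^]\<^bsub>R\<^esub> m) = \<zero>\<^bsub>R\<^esub>)}"

definition loc_class :: "('a, 'b) ring_scheme \<Rightarrow> 'a \<Rightarrow> 'a \<times> nat \<Rightarrow> ('a \<times> nat) set" where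
  "loc_class R s p = loc_rel R s `` {p}"

definition loc_mult :: "('a, 'b) ring_scheme \<Rightarrow> 'a \<Rightarrow> ('a \<times> nat) set \<Rightarrow> ('a \<times> nat) set \<Rightarrow> ('a \<times> nat) set" where
  "loc_mult R s U V = Union {Z. \<exists>a m b k. (a, m) \<in> U \<and> (b, k) \<in> V \<and> Z = loc_class R s (a \<otimes>\<^bsub>R\<^esub> b, m + k)}"

definition loc_add :: "('a, 'b) ring_scheme \<Rightarrow> 'a \<Rightarrow> ('a \<times> nat) set \<Rightarrow> ('a \<times> nat) set \<Rightarrow> ('a \<times> nat) set" where
  "loc_add R s U V = Union {Z. \<exists>a m b k. (a, m) \<in> U \<and> (b, k) \<in> V \<and>
     Z = loc_class R s ((a \<otimes>\<^bsub>R\<^esub> (s [^]\<^bsub>R\<^esub> k)) \<oplus>\<^bsub>R\<^esub> (b \<otimes>\<^bsub>R\<^esub> (s [^]\<^bsub>R\<^esub> m)), m + k)}"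

definition localization :: "('a, 'b) ring_scheme \<Rightarrow> 'a \<Rightarrow> ('a \<times> nat) set ring" where
  "localization R s =
    \<lparr> carrier = (carrier R \<times> UNIV) // loc_rel R s,
      monoid.mult = loc_mult R s,
      one = loc_class R s (\<one>\<^bsub>R\<^esub>, 0),
      ring.zero = loc_class R s (\<zero>\<^bsub>R\<^esub>, 0),
      ring.add = loc_add R s \<rparr>"

end

theory Submission
  imports Defs
begin


locale locs = cring R for R (structure) +
  fixes s assumes s_carr[simp]: "s \<in> carrier R"
begin

abbreviation "rel \<equiv> loc_rel R s"
abbreviation "cls \<equiv> loc_class R s"
abbreviation "T \<equiv> localization R s"

lemma rel_iff:
  "((a,m),(b,k)) \<in> rel \<longleftrightarrow> a \<in> carrier R \<and> b \<in> carrier R \<and>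
     (\<exists>t::nat. s[^]t \<otimes> a \<otimes> s[^]k = s[^]t \<otimes> b \<otimes> s[^]m)"
proof -
  have *: "s[^]t \<otimes> (a \<otimes> s[^]k \<ominus> b \<otimes> s[^]m) = \<zero> \<longleftrightarrow> s[^]t \<otimes> a \<otimes> s[^]k = s[^]t \<otimes> b \<otimes> s[^]m"
    if "a \<in> carrier R" "b \<in> carrier R" for t :: nat
  proof -
    have "s[^]t \<otimes> (a \<otimes> s[^]k \<ominus> b \<otimes> s[^]m) = s[^]t \<otimes> a \<otimes> s[^]k \<ominus> s[^]t \<otimes> b \<otimes> s[^]m"
      using that by (simp add: minus_eq r_distr r_minus m_assoc)
    then show ?thesis using that by simp
  qed
  show ?thesis unfolding loc_rel_def using * by auto
qed

lemma rel_trans: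
  fixes t u k l m :: nat
  assumes h1: "s[^]t \<otimes> a \<otimes> s[^]k = s[^]t \<otimes> b \<otimes> s[^]m"
    and h2: "s[^]u \<otimes> b \<otimes> s[^]l = s[^]u \<otimes> c \<otimes> s[^]k"
    and c: "a \<in> carrier R" "b \<in> carrier R" "c \<in> carrier R"
  shows "s[^](t+u+k) \<otimes> a \<otimes> s[^]l = s[^](t+u+k) \<otimes> c \<otimes> s[^]m"
proof -
  have "s[^](t+u+k) \<otimes> a \<otimes> s[^]l = (s[^]t \<otimes> a \<otimes> s[^]k) \<otimes> (s[^]u \<otimes> s[^]l)"
    using c by (simp add: nat_pow_mult[symmetric] m_ac)
  also have "\<dots> = (s[^]t \<otimes> b \<otimes> s[^]m) \<otimes> (s[^]u \<otimes> s[^]l)" using h1 by simp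
  also have "\<dots> = (s[^]u \<otimes> b \<otimes> s[^]l) \<otimes> (s[^]t \<otimes> s[^]m)" using c by (simp add: m_ac)
  also have "\<dots> = (s[^]u \<otimes> c \<otimes> s[^]k) \<otimes> (s[^]t \<otimes> s[^]m)" using h2 by simp
  also have "\<dots> = s[^](t+u+k) \<otimes> c \<otimes> s[^]m" using c by (simp add: nat_pow_mult[symmetric] m_ac)
  finally show ?thesis .
qed

lemma rel_equiv: "equiv (carrier R \<times> UNIV) rel"
proof (rule equivI)
  show "refl_on (carrier R \<times> UNIV) rel"
    unfolding refl_on_def by (auto simp: rel_iff)
  show "rel \<subseteq> (carrier R \<times> UNIV) \<times> (carrier R \<times> UNIV)" by (auto simp: loc_rel_def)
  show "sym rel"
    unfolding sym_def by (auto simp: rel_iff) (metis)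
  show "trans rel"
    unfolding trans_def
  proof (clarify)
    fix a m b k c l
    assume "((a, m), b, k) \<in> rel" "((b, k), c, l) \<in> rel"
    then obtain t u :: nat where "a \<in> carrier R" "b \<in> carrier R" "c \<in> carrier R"
      "s[^]t \<otimes> a \<otimes> s[^]k = s[^]t \<otimes> b \<otimes> s[^]m" "s[^]u \<otimes> b \<otimes> s[^]l = s[^]u \<otimes> c \<otimes> s[^]k"
      by (auto simp: rel_iff)
    then have "s[^](t+u+k) \<otimes> a \<otimes> s[^]l = s[^](t+u+k) \<otimes> c \<otimes> s[^]m" by (intro rel_trans)
    then show "((a, m), c, l) \<in> rel" using \<open>a \<in> carrier R\<close> \<open>c \<in> carrier R\<close> by (auto simp: rel_iff)
  qed
qed

lemma cls_eq:
  assumes "a \<in> carrier R" "b \<in> carrier R"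
  shows "cls (a,m) = cls (b,k) \<longleftrightarrow> (\<exists>t::nat. s[^]t \<otimes> a \<otimes> s[^]k = s[^]t \<otimes> b \<otimes> s[^]m)"
proof -
  have "cls (a,m) = cls (b,k) \<longleftrightarrow> ((a,m),(b,k)) \<in> rel"
    using equiv_class_eq_iff[OF rel_equiv, of "(a,m)" "(b,k)"] assms
    by (auto simp: loc_class_def)
  then show ?thesis using assms by (simp add: rel_iff)
qed

lemma cls_carrier[simp]: "a \<in> carrier R \<Longrightarrow> cls (a,m) \<in> carrier T"
  by (auto simp: localization_def loc_class_def intro!: quotientI)

lemma carrier_T_E:
  assumes "x \<in> carrier T"
  obtains a m where "a \<in> carrier R" "x = cls (a,m)"
  using assms by (auto simp: localization_def loc_class_def elim!: quotientE)

lemma mem_cls: "q \<in> cls p \<longleftrightarrow> (p,q) \<in> rel"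
  by (simp add: loc_class_def)

lemma cls_scale: "a \<in> carrier R \<Longrightarrow> cls (a \<otimes> s[^]e, m+e) = cls (a, m)"
  by (subst cls_eq) (auto intro!: exI[of _ 0] simp: nat_pow_mult[symmetric] m_ac)

lemma mult_compat:
  assumes "((a,m),(a',m'))\<in>rel" "((b,k),(b',k'))\<in>rel"
  shows "((a\<otimes>b, m+k),(a'\<otimes>b', m'+k'))\<in>rel"
proof -
  from assms obtain t u :: nat where c: "a \<in> carrier R" "a' \<in> carrier R" "b \<in> carrier R" "b' \<in> carrier R"
    and h1: "s[^]t \<otimes> a \<otimes> s[^]m' = s[^]t \<otimes> a' \<otimes> s[^]m"
    and h2: "s[^]u \<otimes> b \<otimes> s[^]k' = s[^]u \<otimes> b' \<otimes> s[^]k"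
    by (auto simp: rel_iff)
  have "s[^](t+u) \<otimes> (a \<otimes> b) \<otimes> s[^](m'+k') = (s[^]t \<otimes> a \<otimes> s[^]m') \<otimes> (s[^]u \<otimes> b \<otimes> s[^]k')"
    using c by (simp add: nat_pow_mult[symmetric] m_ac)
  also have "\<dots> = (s[^]t \<otimes> a' \<otimes> s[^]m) \<otimes> (s[^]u \<otimes> b' \<otimes> s[^]k)" using h1 h2 by simp
  also have "\<dots> = s[^](t+u) \<otimes> (a' \<otimes> b') \<otimes> s[^](m+k)"
    using c by (simp add: nat_pow_mult[symmetric] m_ac)
  finally show ?thesis using c by (auto simp: rel_iff)
qed

lemma add_compat:
  assumes "((a,m),(a',m'))\<in>rel" "((b,k),(b',k'))\<in>rel"
  shows "((a \<otimes> s[^]k \<oplus> b \<otimes> s[^]m, m+k),(a' \<otimes> s[^]k' \<oplus> b' \<otimes> s[^]m', m'+k'))\<in>rel"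
proof -
  from assms obtain t u :: nat where c: "a \<in> carrier R" "a' \<in> carrier R" "b \<in> carrier R" "b' \<in> carrier R"
    and h1: "s[^]t \<otimes> a \<otimes> s[^]m' = s[^]t \<otimes> a' \<otimes> s[^]m"
    and h2: "s[^]u \<otimes> b \<otimes> s[^]k' = s[^]u \<otimes> b' \<otimes> s[^]k"
    by (auto simp: rel_iff)
  have "s[^](t+u) \<otimes> (a \<otimes> s[^]k \<oplus> b \<otimes> s[^]m) \<otimes> s[^](m'+k') =
     (s[^]t \<otimes> a \<otimes> s[^]m') \<otimes> (s[^]u \<otimes> s[^]k \<otimes> s[^]k') \<oplus> (s[^]u \<otimes> b \<otimes> s[^]k') \<otimes> (s[^]t \<otimes> s[^]m \<otimes> s[^]m')"
    using c by (simp add: nat_pow_mult[symmetric] m_ac l_distr r_distr)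
  also have "\<dots> = (s[^]t \<otimes> a' \<otimes> s[^]m) \<otimes> (s[^]u \<otimes> s[^]k \<otimes> s[^]k') \<oplus> (s[^]u \<otimes> b' \<otimes> s[^]k) \<otimes> (s[^]t \<otimes> s[^]m \<otimes> s[^]m')"
    using h1 h2 by simp
  also have "\<dots> = s[^](t+u) \<otimes> (a' \<otimes> s[^]k' \<oplus> b' \<otimes> s[^]m') \<otimes> s[^](m+k)"
    using c by (simp add: nat_pow_mult[symmetric] m_ac l_distr r_distr a_ac)
  finally show ?thesis using c by (auto simp: rel_iff)
qed

lemma self_in_cls: "a \<in> carrier R \<Longrightarrow> (a,m) \<in> cls (a,m)"
  using rel_equiv by (auto simp: mem_cls equiv_def refl_on_def)

lemma loc_mult_cls[simp]:
  assumes "a \<in> carrier R" "b \<in> carrier R"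
  shows "loc_mult R s (cls (a,m)) (cls (b,k)) = cls (a \<otimes> b, m+k)"
proof -
  have "{Z. \<exists>a' m' b' k'. (a', m') \<in> cls (a,m) \<and> (b', k') \<in> cls (b,k) \<and> Z = cls (a' \<otimes> b', m' + k')}
      = {cls (a \<otimes> b, m+k)}"
  proof (intro equalityI subsetI)
    fix Z assume "Z \<in> {Z. \<exists>a' m' b' k'. (a', m') \<in> cls (a,m) \<and> (b', k') \<in> cls (b,k) \<and> Z = cls (a' \<otimes> b', m' + k')}"
    then obtain a' m' b' k' where h: "((a,m),(a',m')) \<in> rel" "((b,k),(b',k')) \<in> rel" "Z = cls (a' \<otimes> b', m' + k')"
      by (auto simp: mem_cls)
    have "((a \<otimes> b, m+k),(a'\<otimes>b', m'+k'))\<in>rel" by (rule mult_compat[OF h(1,2)])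
    then have "cls (a \<otimes> b, m+k) = cls (a'\<otimes>b', m'+k')"
      using equiv_class_eq[OF rel_equiv] by (simp add: loc_class_def)
    then show "Z \<in> {cls (a \<otimes> b, m+k)}" using h by simp
  next
    fix Z assume "Z \<in> {cls (a \<otimes> b, m+k)}"
    then show "Z \<in> {Z. \<exists>a' m' b' k'. (a', m') \<in> cls (a,m) \<and> (b', k') \<in> cls (b,k) \<and> Z = cls (a' \<otimes> b', m' + k')}"
      using self_in_cls assms by blast
  qed
  then show ?thesis unfolding loc_mult_def by simp
qed

lemma loc_add_cls[simp]:
  assumes "a \<in> carrier R" "b \<in> carrier R"
  shows "loc_add R s (cls (a,m)) (cls (b,k)) = cls (a \<otimes> s[^]k \<oplus> b \<otimes> s[^]m, m+k)"
proof -
  have "{Z. \<exists>a' m' b' k'. (a', m') \<in> cls (a,m) \<and> (b', k') \<in> cls (b,k) \<and> Z = cls (a' \<otimes> s[^]k' \<oplus> b' \<otimes> s[^]m', m' + k')}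
      = {cls (a \<otimes> s[^]k \<oplus> b \<otimes> s[^]m, m+k)}"
  proof (intro equalityI subsetI)
    fix Z assume "Z \<in> {Z. \<exists>a' m' b' k'. (a', m') \<in> cls (a,m) \<and> (b', k') \<in> cls (b,k) \<and> Z = cls (a' \<otimes> s[^]k' \<oplus> b' \<otimes> s[^]m', m' + k')}"
    then obtain a' m' b' k' where h: "((a,m),(a',m')) \<in> rel" "((b,k),(b',k')) \<in> rel" "Z = cls (a' \<otimes> s[^]k' \<oplus> b' \<otimes> s[^]m', m' + k')"
      by (auto simp: mem_cls)
    have "((a \<otimes> s[^]k \<oplus> b \<otimes> s[^]m, m+k),(a' \<otimes> s[^]k' \<oplus> b' \<otimes> s[^]m', m'+k'))\<in>rel" by (rule add_compat[OF h(1,2)])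
    then have "cls (a \<otimes> s[^]k \<oplus> b \<otimes> s[^]m, m+k) = cls (a' \<otimes> s[^]k' \<oplus> b' \<otimes> s[^]m', m'+k')"
      using equiv_class_eq[OF rel_equiv] by (simp add: loc_class_def)
    then show "Z \<in> {cls (a \<otimes> s[^]k \<oplus> b \<otimes> s[^]m, m+k)}" using h by simp
  next
    fix Z assume "Z \<in> {cls (a \<otimes> s[^]k \<oplus> b \<otimes> s[^]m, m+k)}"
    then show "Z \<in> {Z. \<exists>a' m' b' k'. (a', m') \<in> cls (a,m) \<and> (b', k') \<in> cls (b,k) \<and> Z = cls (a' \<otimes> s[^]k' \<oplus> b' \<otimes> s[^]m', m' + k')}"
      using self_in_cls assms by blast
  qed
  then show ?thesis unfolding loc_add_def by simp
qed

lemma T_carrier: "carrier T = (carrier R \<times> UNIV) // rel"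
  by (simp add: localization_def)

lemma T_simps[simp]:
  "x \<otimes>\<^bsub>T\<^esub> y = loc_mult R s x y"
  "x \<oplus>\<^bsub>T\<^esub> y = loc_add R s x y"
  "\<one>\<^bsub>T\<^esub> = cls (\<one>, 0)"
  "\<zero>\<^bsub>T\<^esub> = cls (\<zero>, 0)"
  by (simp_all add: localization_def)

lemma cls_zero: "cls (\<zero>, m) = cls (\<zero>, 0)"
  by (subst cls_eq) auto

lemma T_cring: "cring T"
proof (rule cringI)
  show "abelian_group T"
  proof (rule abelian_groupI)
    fix x y assume "x \<in> carrier T" "y \<in> carrier T"
    then show "x \<oplus>\<^bsub>T\<^esub> y \<in> carrier T" by (elim carrier_T_E) simp
  next
    show "\<zero>\<^bsub>T\<^esub> \<in> carrier T" by simp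
  next
    fix x y z assume "x \<in> carrier T" "y \<in> carrier T" "z \<in> carrier T"
    then obtain a m b k c l where c: "a \<in> carrier R" "b \<in> carrier R" "c \<in> carrier R"
      and e: "x = cls (a,m)" "y = cls (b,k)" "z = cls (c,l)"
      by (elim carrier_T_E) blast
    have "(a \<otimes> s[^]k \<oplus> b \<otimes> s[^]m) \<otimes> s[^]l \<oplus> c \<otimes> s[^](m+k) = a \<otimes> s[^](k+l) \<oplus> (b \<otimes> s[^]l \<oplus> c \<otimes> s[^]k) \<otimes> s[^]m"
      using c by (simp add: l_distr r_distr nat_pow_mult[symmetric] m_ac a_assoc)
    moreover have "m + k + l = m + (k + l)" by simp
    ultimately show "x \<oplus>\<^bsub>T\<^esub> y \<oplus>\<^bsub>T\<^esub> z = x \<oplus>\<^bsub>T\<^esub> (y \<oplus>\<^bsub>T\<^esub> z)"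
      using c e by (simp add: add.assoc)
  next
    fix x y assume "x \<in> carrier T" "y \<in> carrier T"
    then obtain a m b k where c: "a \<in> carrier R" "b \<in> carrier R"
      and e: "x = cls (a,m)" "y = cls (b,k)"
      by (elim carrier_T_E) blast
    have "a \<otimes> s[^]k \<oplus> b \<otimes> s[^]m = b \<otimes> s[^]m \<oplus> a \<otimes> s[^]k" using c by (simp add: a_comm)
    moreover have "m + k = k + m" by simp
    ultimately show "x \<oplus>\<^bsub>T\<^esub> y = y \<oplus>\<^bsub>T\<^esub> x"
      using c e by (simp add: add.commute)
  next
    fix x assume "x \<in> carrier T"
    then show "\<zero>\<^bsub>T\<^esub> \<oplus>\<^bsub>T\<^esub> x = x"
      by (elim carrier_T_E) simp
  next
    fix x assume "x \<in> carrier T"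
    then obtain a m where a: "a \<in> carrier R" "x = cls (a,m)" by (elim carrier_T_E)
    have "cls (\<ominus> a, m) \<oplus>\<^bsub>T\<^esub> x = cls (\<zero>, m + m)"
      using a by (simp add: l_minus l_neg)
    also have "\<dots> = \<zero>\<^bsub>T\<^esub>" unfolding T_simps by (rule cls_zero)
    finally have "cls (\<ominus> a, m) \<oplus>\<^bsub>T\<^esub> x = \<zero>\<^bsub>T\<^esub>" .
    moreover have "cls (\<ominus> a, m) \<in> carrier T" using a by simp
    ultimately show "\<exists>y\<in>carrier T. y \<oplus>\<^bsub>T\<^esub> x = \<zero>\<^bsub>T\<^esub>" by blast
  qed
next
  show "comm_monoid T"
  proof (rule comm_monoidI)
    fix x y assume "x \<in> carrier T" "y \<in> carrier T"
    then show "x \<otimes>\<^bsub>T\<^esub> y \<in> carrier T" by (elim carrier_T_E) simp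
  next
    show "\<one>\<^bsub>T\<^esub> \<in> carrier T" by simp
  next
    fix x y z assume "x \<in> carrier T" "y \<in> carrier T" "z \<in> carrier T"
    then show "x \<otimes>\<^bsub>T\<^esub> y \<otimes>\<^bsub>T\<^esub> z = x \<otimes>\<^bsub>T\<^esub> (y \<otimes>\<^bsub>T\<^esub> z)"
      by (elim carrier_T_E) (simp add: m_assoc add.assoc)
  next
    fix x assume "x \<in> carrier T"
    then show "\<one>\<^bsub>T\<^esub> \<otimes>\<^bsub>T\<^esub> x = x"
      by (elim carrier_T_E) simp
  next
    fix x y assume "x \<in> carrier T" "y \<in> carrier T"
    then obtain a m b k where c: "a \<in> carrier R" "b \<in> carrier R"
      and e: "x = cls (a,m)" "y = cls (b,k)"
      by (elim carrier_T_E) blast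
    have "a \<otimes> b = b \<otimes> a" using c by (simp add: m_comm)
    moreover have "m + k = k + m" by simp
    ultimately show "x \<otimes>\<^bsub>T\<^esub> y = y \<otimes>\<^bsub>T\<^esub> x"
      using c e by (simp add: add.commute)
  qed
next
  fix x y z assume "x \<in> carrier T" "y \<in> carrier T" "z \<in> carrier T"
  then obtain a m b k c l where c: "a \<in> carrier R" "b \<in> carrier R" "c \<in> carrier R"
    and e: "x = cls (a,m)" "y = cls (b,k)" "z = cls (c,l)"
    by (elim carrier_T_E) blast
  have "(x \<oplus>\<^bsub>T\<^esub> y) \<otimes>\<^bsub>T\<^esub> z = cls ((a \<otimes> s[^]k \<oplus> b \<otimes> s[^]m) \<otimes> c, m + k + l)"
    using c e by simp
  also have "\<dots> = cls ((a \<otimes> s[^]k \<oplus> b \<otimes> s[^]m) \<otimes> c \<otimes> s[^]l, m + k + l + l)"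
    using c by (simp add: cls_scale)
  also have "\<dots> = cls (a \<otimes> c \<otimes> s[^](k+l) \<oplus> b \<otimes> c \<otimes> s[^](m+l), m + l + (k + l))"
  proof -
    have "(a \<otimes> s[^]k \<oplus> b \<otimes> s[^]m) \<otimes> c \<otimes> s[^]l = a \<otimes> c \<otimes> s[^](k+l) \<oplus> b \<otimes> c \<otimes> s[^](m+l)"
      using c by (simp add: l_distr r_distr nat_pow_mult[symmetric] m_ac)
    moreover have "m + k + l + l = m + l + (k + l)" by simp
    ultimately show ?thesis by (simp only:)
  qed
  also have "\<dots> = x \<otimes>\<^bsub>T\<^esub> z \<oplus>\<^bsub>T\<^esub> y \<otimes>\<^bsub>T\<^esub> z"
    using c e by simp
  finally show "(x \<oplus>\<^bsub>T\<^esub> y) \<otimes>\<^bsub>T\<^esub> z = x \<otimes>\<^bsub>T\<^esub> z \<oplus>\<^bsub>T\<^esub> y \<otimes>\<^bsub>T\<^esub> z" .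
qed

end


context cring begin

lemma vecs_iff: "x \<in> vecs R n \<longleftrightarrow> (\<forall>i<n. x i \<in> carrier R) \<and> (\<forall>i\<ge>n. x i = \<zero>)"
  by (simp add: vecs_def)

lemma vecs_carrier: "x \<in> vecs R n \<Longrightarrow> i < n \<Longrightarrow> x i \<in> carrier R"
  by (simp add: vecs_def)

lemma lin_comb_closed:
  "x \<in> vecs R n \<Longrightarrow> \<forall>i<n. a i \<in> carrier R \<Longrightarrow> lin_comb R n x a \<in> carrier R"
  unfolding lin_comb_def vecs_def by (intro finsum_closed) auto

lemma lin_comb_add:
  assumes "x \<in> vecs R n" "y \<in> vecs R n" "\<forall>i<n. a i \<in> carrier R"
  shows "lin_comb R n x a \<oplus> lin_comb R n y a = lin_comb R n (\<lambda>i. x i \<oplus> y i) a"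
proof -
  have "lin_comb R n x a \<oplus> lin_comb R n y a = (\<Oplus>i\<in>{..<n}. x i \<otimes> a i \<oplus> y i \<otimes> a i)"
    unfolding lin_comb_def using assms by (intro finsum_addf[symmetric]) (auto simp: vecs_def)
  also have "\<dots> = lin_comb R n (\<lambda>i. x i \<oplus> y i) a"
    unfolding lin_comb_def using assms by (intro finsum_cong) (auto simp: vecs_def l_distr)
  finally show ?thesis .
qed

lemma vecs_add: "x \<in> vecs R n \<Longrightarrow> y \<in> vecs R n \<Longrightarrow> (\<lambda>i. x i \<oplus> y i) \<in> vecs R n"
  by (auto simp: vecs_def)

lemma vecs_smult: "r \<in> carrier R \<Longrightarrow> x \<in> vecs R n \<Longrightarrow> (\<lambda>i. r \<otimes> x i) \<in> vecs R n"
  by (auto simp: vecs_def)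

lemma vsmult_eq: "x \<in> vecs R n \<Longrightarrow> r \<in> carrier R \<Longrightarrow> vsmult R n r x = (\<lambda>i. r \<otimes> x i)"
  by (auto simp: vsmult_def vecs_def)

lemma lin_comb_smult:
  assumes "x \<in> vecs R n" "r \<in> carrier R" "\<forall>i<n. a i \<in> carrier R"
  shows "r \<otimes> lin_comb R n x a = lin_comb R n (\<lambda>i. r \<otimes> x i) a"
proof -
  have "r \<otimes> lin_comb R n x a = (\<Oplus>i\<in>{..<n}. r \<otimes> (x i \<otimes> a i))"
    unfolding lin_comb_def using assms by (intro finsum_rdistr) (auto simp: vecs_def)
  also have "\<dots> = lin_comb R n (\<lambda>i. r \<otimes> x i) a"
    unfolding lin_comb_def using assms by (intro finsum_cong) (auto simp: vecs_def m_assoc)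
  finally show ?thesis .
qed

lemma zero_vec: "(\<lambda>_. \<zero>) \<in> vecs R n"
  by (simp add: vecs_def)

lemma lincombs_ideal:
  assumes a: "\<forall>i<n. a i \<in> carrier R"
  shows "ideal {y. \<exists>x\<in>vecs R n. y = lin_comb R n x a} R"
proof (rule idealI[OF cring.axioms(1)[OF is_cring]])
  show "subgroup {y. \<exists>x\<in>vecs R n. y = lin_comb R n x a} (add_monoid R)"
  proof (rule add.subgroupI)
    show "{y. \<exists>x\<in>vecs R n. y = lin_comb R n x a} \<subseteq> carrier R"
      using lin_comb_closed a by auto
    show "{y. \<exists>x\<in>vecs R n. y = lin_comb R n x a} \<noteq> {}"
      using zero_vec by blast
  next
    fix y assume "y \<in> {y. \<exists>x\<in>vecs R n. y = lin_comb R n x a}"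
    then obtain x where x: "x \<in> vecs R n" "y = lin_comb R n x a" by blast
    have "\<ominus> y = (\<ominus> \<one>) \<otimes> y" using x lin_comb_closed a by (simp add: l_minus)
    also have "\<dots> = lin_comb R n (\<lambda>i. (\<ominus> \<one>) \<otimes> x i) a" using x a by (simp add: lin_comb_smult)
    finally show "\<ominus> y \<in> {y. \<exists>x\<in>vecs R n. y = lin_comb R n x a}"
      using vecs_smult[of "\<ominus> \<one>" x n] x by auto
  next
    fix y z assume "y \<in> {y. \<exists>x\<in>vecs R n. y = lin_comb R n x a}" "z \<in> {y. \<exists>x\<in>vecs R n. y = lin_comb R n x a}"
    then obtain x x' where x: "x \<in> vecs R n" "y = lin_comb R n x a" "x' \<in> vecs R n" "z = lin_comb R n x' a" by blast
    then show "y \<oplus> z \<in> {y. \<exists>x\<in>vecs R n. y = lin_comb R n x a}"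
      using lin_comb_add[OF x(1,3) a] vecs_add[OF x(1,3)] by auto
  qed
next
  fix y r assume "y \<in> {y. \<exists>x\<in>vecs R n. y = lin_comb R n x a}" "r \<in> carrier R"
  then obtain x where x: "x \<in> vecs R n" "y = lin_comb R n x a" by blast
  then show "r \<otimes> y \<in> {y. \<exists>x\<in>vecs R n. y = lin_comb R n x a}"
    using lin_comb_smult[OF x(1) \<open>r \<in> carrier R\<close> a] vecs_smult[OF \<open>r \<in> carrier R\<close> x(1)] by auto
  then show "y \<otimes> r \<in> {y. \<exists>x\<in>vecs R n. y = lin_comb R n x a}"
    using x \<open>r \<in> carrier R\<close> lin_comb_closed a by (simp add: m_comm)
qed

lemma finsum_in_ideal:
  assumes J: "ideal J R" and fin: "finite A" and f: "\<forall>i\<in>A. f i \<in> J"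
  shows "finsum R f A \<in> J"
  using fin f
proof (induct A rule: finite_induct)
  case empty
  then show ?case using J by (simp add: additive_subgroup.zero_closed ideal.axioms(1))
next
  case (insert x F)
  have sub: "J \<subseteq> carrier R" using J by (simp add: additive_subgroup.a_subset ideal.axioms(1))
  have "finsum R f (insert x F) = f x \<oplus> finsum R f F"
    using insert sub by (intro finsum_insert) auto
  then show ?case using insert J by (simp add: additive_subgroup.a_closed ideal.axioms(1))
qed

lemma lincomb_in_ideal:
  assumes J: "ideal J R" and a: "\<forall>i<n. a i \<in> J" and x: "x \<in> vecs R n"
  shows "lin_comb R n x a \<in> J"
  unfolding lin_comb_def
  using a x by (intro finsum_in_ideal[OF J]) (auto simp: vecs_def ideal.I_l_closed[OF J])

lemma unit_vec: "j < n \<Longrightarrow> (\<lambda>i. if i = j then \<one> else \<zero>) \<in> vecs R n"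
  by (auto simp: vecs_def)

lemma lin_comb_unit:
  assumes "\<forall>i<n. a i \<in> carrier R" "j < n"
  shows "lin_comb R n (\<lambda>i. if i = j then \<one> else \<zero>) a = a j"
proof -
  have "lin_comb R n (\<lambda>i. if i = j then \<one> else \<zero>) a = (\<Oplus>i\<in>{..<n}. if i = j then a i else \<zero>)"
    unfolding lin_comb_def using assms by (intro finsum_cong) (auto simp: simp_implies_def)
  also have "\<dots> = a j" using assms by (intro add.finprod_singleton_swap) auto
  finally show ?thesis .
qed

lemma finsum_swap:
  assumes "finite A" "finite B" "\<forall>i\<in>A. \<forall>j\<in>B. f i j \<in> carrier R"
  shows "(\<Oplus>i\<in>A. \<Oplus>j\<in>B. f i j) = (\<Oplus>j\<in>B. \<Oplus>i\<in>A. f i j)"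
  using assms(1,3)
proof (induct A rule: finite_induct)
  case empty
  then show ?case by (simp add: finsum_zero)
next
  case (insert x F)
  have "(\<Oplus>i\<in>insert x F. \<Oplus>j\<in>B. f i j) = (\<Oplus>j\<in>B. f x j) \<oplus> (\<Oplus>i\<in>F. \<Oplus>j\<in>B. f i j)"
    using insert by (intro finsum_insert) (auto intro!: finsum_closed)
  also have "\<dots> = (\<Oplus>j\<in>B. f x j) \<oplus> (\<Oplus>j\<in>B. \<Oplus>i\<in>F. f i j)" using insert by simp
  also have "\<dots> = (\<Oplus>j\<in>B. f x j \<oplus> (\<Oplus>i\<in>F. f i j))"
    using insert by (intro finsum_addf[symmetric]) (auto intro!: finsum_closed)
  also have "\<dots> = (\<Oplus>j\<in>B. \<Oplus>i\<in>insert x F. f i j)"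
    using insert by (intro finsum_cong) (auto simp: finsum_insert)
  finally show ?case .
qed

lemma vspan_in_vecs:
  fixes m :: nat
  assumes "\<forall>j<m. c j \<in> carrier R" "\<forall>j<m. w j \<in> vecs R n"
  shows "(\<lambda>i. if i < n then (\<Oplus>j\<in>{..<m}. c j \<otimes> w j i) else \<zero>) \<in> vecs R n"
  using assms by (auto simp: vecs_def intro!: finsum_closed)

lemma lin_comb_vspan_zero:
  fixes m :: nat
  assumes c: "\<forall>j<m. c j \<in> carrier R" and w: "\<forall>j<m. w j \<in> vecs R n"
    and a: "\<forall>i<n. a i \<in> carrier R" and z: "\<forall>j<m. lin_comb R n (w j) a = \<zero>"
  shows "lin_comb R n (\<lambda>i. if i < n then (\<Oplus>j\<in>{..<m}. c j \<otimes> w j i) else \<zero>) a = \<zero>"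
proof -
  have "lin_comb R n (\<lambda>i. if i < n then (\<Oplus>j\<in>{..<m}. c j \<otimes> w j i) else \<zero>) a
      = (\<Oplus>i\<in>{..<n}. \<Oplus>j\<in>{..<m}. c j \<otimes> (w j i \<otimes> a i))"
  proof -
    have pt: "(\<Oplus>j\<in>{..<m}. c j \<otimes> w j i) \<otimes> a i = (\<Oplus>j\<in>{..<m}. c j \<otimes> (w j i \<otimes> a i))"
      if "i < n" for i
    proof -
      have "(\<Oplus>j\<in>{..<m}. c j \<otimes> w j i) \<otimes> a i = (\<Oplus>j\<in>{..<m}. c j \<otimes> w j i \<otimes> a i)"
        using c w a that by (intro finsum_ldistr) (auto simp: vecs_def)
      also have "\<dots> = (\<Oplus>j\<in>{..<m}. c j \<otimes> (w j i \<otimes> a i))"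
        using c w a that by (intro finsum_cong) (auto simp: vecs_def m_assoc simp_implies_def)
      finally show ?thesis .
    qed
    show ?thesis unfolding lin_comb_def
      using c w a pt by (intro finsum_cong) (auto simp: vecs_def simp_implies_def intro!: finsum_closed)
  qed
  also have "\<dots> = (\<Oplus>j\<in>{..<m}. \<Oplus>i\<in>{..<n}. c j \<otimes> (w j i \<otimes> a i))"
    using c w a by (intro finsum_swap) (auto simp: vecs_def)
  also have "\<dots> = (\<Oplus>j\<in>{..<m}. c j \<otimes> lin_comb R n (w j) a)"
    unfolding lin_comb_def using c w a
    by (intro finsum_cong) (auto simp: finsum_rdistr vecs_def)
  also have "\<dots> = \<zero>" using c z by (intro add.finprod_one_eqI) auto
  finally show ?thesis .
qed

lemma gen_in_vspan:
  assumes w: "\<forall>j<m. w j \<in> vecs R n" and j: "j < m"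
  shows "w j \<in> vspan R n m w"
proof -
  have "w j = (\<lambda>i. if i < n then (\<Oplus>l\<in>{..<m}. (if l = j then \<one> else \<zero>) \<otimes> w l i) else \<zero>)"
  proof
    fix i
    show "w j i = (if i < n then (\<Oplus>l\<in>{..<m}. (if l = j then \<one> else \<zero>) \<otimes> w l i) else \<zero>)"
    proof (cases "i < n")
      case True
      have "(\<Oplus>l\<in>{..<m}. (if l = j then \<one> else \<zero>) \<otimes> w l i) = (\<Oplus>l\<in>{..<m}. if l = j then w l i else \<zero>)"
        using w True by (intro finsum_cong) (auto simp: vecs_def simp_implies_def)
      also have "\<dots> = w j i" using w True j by (intro add.finprod_singleton_swap) (auto simp: vecs_def)
      finally show ?thesis using True by simp
    next
      case False
      then show ?thesis using w j by (simp add: vecs_def)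
    qed
  qed
  then show ?thesis unfolding vspan_def by (intro CollectI exI[of _ "\<lambda>l. if l = j then \<one> else \<zero>"]) auto
qed

end

lemma (in ring_hom_cring) hom_lin_comb:
  assumes x: "x \<in> vecs R n" and a: "\<forall>i<n. a i \<in> carrier R"
  shows "h (lin_comb R n x a) = lin_comb S n (\<lambda>i. if i < n then h (x i) else \<zero>\<^bsub>S\<^esub>) (\<lambda>i. h (a i))"
proof -
  have "h (lin_comb R n x a) = (\<Oplus>\<^bsub>S\<^esub> i\<in>{..<n}. h (x i \<otimes> a i))"
    unfolding lin_comb_def using x a by (subst hom_finsum) (auto simp: vecs_def o_def)
  also have "\<dots> = lin_comb S n (\<lambda>i. if i < n then h (x i) else \<zero>\<^bsub>S\<^esub>) (\<lambda>i. h (a i))"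
    unfolding lin_comb_def using x a by (intro S.finsum_cong) (auto simp: vecs_def)
  finally show ?thesis .
qed

lemma (in ring_hom_cring) hom_vec:
  "x \<in> vecs R n \<Longrightarrow> (\<lambda>i. if i < n then h (x i) else \<zero>\<^bsub>S\<^esub>) \<in> vecs S n"
  by (auto simp: vecs_def)



context locs begin

lemma h_hom: "(\<lambda>r. cls (r,0)) \<in> ring_hom R T"
  by (rule ring_hom_memI) auto

lemma h_rhc: "ring_hom_cring R T (\<lambda>r. cls (r,0))"
  by (intro ring_hom_cring.intro ring_hom_cring_axioms.intro is_cring T_cring h_hom)

lemma h_rhr: "ring_hom_ring R T (\<lambda>r. cls (r,0))"
  by (rule ring_hom_ringI2[OF cring.axioms(1)[OF is_cring] cring.axioms(1)[OF T_cring] h_hom])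

lemma cls_split: "a \<in> carrier R \<Longrightarrow> cls (a,m) = cls (a,0) \<otimes>\<^bsub>T\<^esub> cls (\<one>, m)"
  by simp

lemma main:
  assumes us: "u_S_coherent R s"
  shows "coherent_ring T"
  unfolding coherent_ring_def
proof (intro allI impI, elim conjE)
  fix A assume finA: "finite A" and Asub: "A \<subseteq> carrier T"
  interpret T: cring T by (rule T_cring)
  obtain k :: nat and g where Ag: "A = g ` {i. i < k}"
    using finite_imp_nat_seg_image_inj_on[OF finA] by blast
  have "\<forall>j\<in>{..<k}. \<exists>p. fst p \<in> carrier R \<and> g j = cls p"
  proof
    fix j assume "j \<in> {..<k}"
    then have "g j \<in> carrier T" using Ag Asub by auto
    then show "\<exists>p. fst p \<in> carrier R \<and> g j = cls p"
      by (elim carrier_T_E) auto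
  qed
  then have "\<exists>P. \<forall>j\<in>{..<k}. fst (P j) \<in> carrier R \<and> g j = cls (P j)" by (rule bchoice)
  then obtain P where P: "\<forall>j\<in>{..<k}. fst (P j) \<in> carrier R \<and> g j = cls (P j)"
    by (elim exE)
  define \<alpha> where "\<alpha> j = fst (P j)" for j
  define \<mu> where "\<mu> j = snd (P j)" for j
  have \<alpha>c: "\<alpha> j \<in> carrier R" and g\<alpha>: "g j = cls (\<alpha> j, \<mu> j)" if "j < k" for j
    using P that by (auto simp: \<alpha>_def \<mu>_def)
  define I where "I = Idl (\<alpha> ` {..<k})"
  have \<alpha>sub: "\<alpha> ` {..<k} \<subseteq> carrier R" using \<alpha>c by auto
  have "u_S_fp_ideal R s I"
    using us \<alpha>sub unfolding u_S_coherent_def I_def by auto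
  then obtain n K b where fgK: "fg_submodule R n K" and b: "\<forall>i<n. b i \<in> carrier R"
    and Kz: "\<forall>x\<in>K. lin_comb R n x b = \<zero>"
    and bI: "\<forall>x\<in>vecs R n. lin_comb R n x b \<in> I"
    and ker: "\<forall>x\<in>vecs R n. lin_comb R n x b = \<zero> \<longrightarrow> vsmult R n s x \<in> K"
    and sur: "\<forall>y\<in>I. \<exists>x\<in>vecs R n. s \<otimes> y = lin_comb R n x b"
    unfolding u_S_fp_ideal_def by blast
  from fgK obtain m v where v: "\<forall>j<m. v j \<in> vecs R n" and Kv: "K = vspan R n m v"
    unfolding fg_submodule_def by blast
  define a' where "a' = (\<lambda>i. cls (b i, 0))"
  define hv where "hv x = (\<lambda>i::nat. if i < n then cls (x i, 0) else \<zero>\<^bsub>T\<^esub>)" for x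
  have a'c: "\<forall>i<n. a' i \<in> carrier T" using b by (simp add: a'_def)
  have hvv: "hv x \<in> vecs T n" if "x \<in> vecs R n" for x
    using ring_hom_cring.hom_vec[OF h_rhc that] by (simp add: hv_def)
  have hlc: "cls (lin_comb R n x b, 0) = lin_comb T n (hv x) a'" if "x \<in> vecs R n" for x
    using ring_hom_cring.hom_lin_comb[OF h_rhc that b] by (simp add: hv_def a'_def)
  define LT where "LT = {y. \<exists>x\<in>vecs T n. y = lin_comb T n x a'}"
  have idealLT: "ideal LT T" unfolding LT_def by (rule T.lincombs_ideal[OF a'c])
  have ALT: "A \<subseteq> LT"
  proof
    fix y assume "y \<in> A"
    then obtain j where j: "j < k" "y = g j" using Ag by auto
    have "\<alpha> j \<in> I" unfolding I_def using genideal_self[OF \<alpha>sub] j by auto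
    then obtain x where x: "x \<in> vecs R n" "s \<otimes> \<alpha> j = lin_comb R n x b" using sur by blast
    have lcc: "lin_comb R n x b \<in> carrier R" using lin_comb_closed[OF x(1) b] .
    have "y = cls (\<alpha> j \<otimes> s[^](1::nat), \<mu> j + 1)" using j g\<alpha>[OF j(1)] cls_scale[OF \<alpha>c[OF j(1)], of 1 "\<mu> j"] by simp
    also have "\<dots> = cls (lin_comb R n x b, \<mu> j + 1)" using x \<alpha>c j by (simp add: m_comm)
    also have "\<dots> = cls (\<one>, \<mu> j + 1) \<otimes>\<^bsub>T\<^esub> cls (lin_comb R n x b, 0)" using lcc by simp
    also have "\<dots> = cls (\<one>, \<mu> j + 1) \<otimes>\<^bsub>T\<^esub> lin_comb T n (hv x) a'" using hlc[OF x(1)] by simp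
    also have "\<dots> = lin_comb T n (\<lambda>i. cls (\<one>, \<mu> j + 1) \<otimes>\<^bsub>T\<^esub> hv x i) a'"
      by (rule T.lin_comb_smult[OF hvv[OF x(1)] _ a'c]) simp
    finally show "y \<in> LT" unfolding LT_def
      using T.vecs_smult[OF _ hvv[OF x(1)], of "cls (\<one>, \<mu> j + 1)"] by auto
  qed
  have J: "ideal (Idl\<^bsub>T\<^esub> A) T" by (rule T.genideal_ideal[OF Asub])
  have AJ: "A \<subseteq> Idl\<^bsub>T\<^esub> A" by (rule T.genideal_self[OF Asub])
  have IJ: "I \<subseteq> {r \<in> carrier R. cls (r,0) \<in> Idl\<^bsub>T\<^esub> A}"
    unfolding I_def
  proof (rule genideal_minimal[OF ring_hom_ring.ideal_vimage[OF h_rhr J]])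
    show "\<alpha> ` {..<k} \<subseteq> {r \<in> carrier R. cls (r, 0) \<in> Idl\<^bsub>T\<^esub> A}"
    proof
      fix r assume "r \<in> \<alpha> ` {..<k}"
      then obtain j where j: "j < k" "r = \<alpha> j" by auto
      have gA: "g j \<in> Idl\<^bsub>T\<^esub> A" using AJ Ag j by auto
      have "cls (r, 0) = cls (\<alpha> j \<otimes> s[^]\<mu> j, 0 + \<mu> j)" using j cls_scale[OF \<alpha>c[OF j(1)], of "\<mu> j" 0] by simp
      also have "\<dots> = g j \<otimes>\<^bsub>T\<^esub> cls (s[^]\<mu> j, 0)" using j \<alpha>c g\<alpha> by simp
      finally have "cls (r, 0) \<in> Idl\<^bsub>T\<^esub> A" using ideal.I_r_closed[OF J gA, of "cls (s[^]\<mu> j, 0)"] by simp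
      then show "r \<in> {r \<in> carrier R. cls (r, 0) \<in> Idl\<^bsub>T\<^esub> A}" using j \<alpha>c by auto
    qed
  qed
  have a'J: "\<forall>i<n. a' i \<in> Idl\<^bsub>T\<^esub> A"
  proof (intro allI impI)
    fix i assume i: "i < n"
    have "b i = lin_comb R n (\<lambda>l. if l = i then \<one> else \<zero>) b" using lin_comb_unit[OF b i] by simp
    also have "\<dots> \<in> I" using bI unit_vec[OF i] by blast
    finally show "a' i \<in> Idl\<^bsub>T\<^esub> A" using IJ by (auto simp: a'_def)
  qed
  have LTJ: "LT \<subseteq> Idl\<^bsub>T\<^esub> A"
    unfolding LT_def using T.lincomb_in_ideal[OF J a'J] by auto
  have IdlA: "Idl\<^bsub>T\<^esub> A = LT"
    using T.genideal_minimal[OF idealLT ALT] LTJ by auto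
  define v' where "v' j = hv (v j)" for j
  have v'v: "\<forall>j<m. v' j \<in> vecs T n" using v hvv by (simp add: v'_def)
  have vK: "v j \<in> K" if "j < m" for j using gen_in_vspan[OF v that] Kv by simp
  have v'z: "\<forall>j<m. lin_comb T n (v' j) a' = \<zero>\<^bsub>T\<^esub>"
  proof (intro allI impI)
    fix j assume j: "j < m"
    have "lin_comb T n (v' j) a' = cls (lin_comb R n (v j) b, 0)"
      using hlc v j by (simp add: v'_def)
    also have "\<dots> = \<zero>\<^bsub>T\<^esub>" using Kz vK[OF j] by simp
    finally show "lin_comb T n (v' j) a' = \<zero>\<^bsub>T\<^esub>" .
  qed
  have KT: "{x \<in> vecs T n. lin_comb T n x a' = \<zero>\<^bsub>T\<^esub>} = vspan T n m v'"
  proof (intro equalityI subsetI)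
    fix y assume "y \<in> vspan T n m v'"
    then obtain c where c: "\<forall>j<m. c j \<in> carrier T"
      and y: "y = (\<lambda>i. if i < n then (\<Oplus>\<^bsub>T\<^esub> j\<in>{..<m}. c j \<otimes>\<^bsub>T\<^esub> v' j i) else \<zero>\<^bsub>T\<^esub>)"
      unfolding vspan_def by blast
    show "y \<in> {x \<in> vecs T n. lin_comb T n x a' = \<zero>\<^bsub>T\<^esub>}"
      using T.vspan_in_vecs[OF c v'v] T.lin_comb_vspan_zero[OF c v'v a'c v'z] y by simp
  next
    fix y assume "y \<in> {x \<in> vecs T n. lin_comb T n x a' = \<zero>\<^bsub>T\<^esub>}"
    then have yv: "y \<in> vecs T n" and yz: "lin_comb T n y a' = \<zero>\<^bsub>T\<^esub>" by auto
    have "\<forall>i\<in>{..<n}. \<exists>p. fst p \<in> carrier R \<and> y i = cls p"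
    proof
      fix i assume "i \<in> {..<n}"
      then have "y i \<in> carrier T" using yv by (simp add: vecs_def)
      then show "\<exists>p. fst p \<in> carrier R \<and> y i = cls p" by (elim carrier_T_E) auto
    qed
    then have "\<exists>Q. \<forall>i\<in>{..<n}. fst (Q i) \<in> carrier R \<and> y i = cls (Q i)" by (rule bchoice)
    then obtain Q where Q: "\<forall>i\<in>{..<n}. fst (Q i) \<in> carrier R \<and> y i = cls (Q i)"
      by (elim exE)
    define E where "E = (\<Sum>i<n. snd (Q i))"
    define z where "z = (\<lambda>i. if i < n then fst (Q i) \<otimes> s[^](E - snd (Q i)) else \<zero>)"
    have zv: "z \<in> vecs R n" using Q by (auto simp: vecs_def z_def)
    have yi: "y i = cls (z i, E)" if "i < n" for i
    proof -
      have le: "snd (Q i) \<le> E" unfolding E_def using that by (intro member_le_sum) auto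
      have qc: "fst (Q i) \<in> carrier R" using Q that by auto
      have "y i = cls (fst (Q i), snd (Q i))" using Q that by auto
      also have "\<dots> = cls (fst (Q i) \<otimes> s[^](E - snd (Q i)), snd (Q i) + (E - snd (Q i)))"
        using qc cls_scale by simp
      also have "snd (Q i) + (E - snd (Q i)) = E" using le by simp
      finally show ?thesis using that by (simp add: z_def)
    qed
    define w where "w = lin_comb R n z b"
    have wc: "w \<in> carrier R" using lin_comb_closed[OF zv b] w_def by simp
    have cz: "cls (\<zero>, E) = cls (\<zero>, 0)" by (rule cls_zero)
    have yeq: "y = (\<lambda>i. cls (\<one>, E) \<otimes>\<^bsub>T\<^esub> hv z i)"
    proof
      fix i show "y i = cls (\<one>, E) \<otimes>\<^bsub>T\<^esub> hv z i"
      proof (cases "i < n")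
        case True then show ?thesis using yi[OF True] zv by (simp add: hv_def vecs_def)
      next
        case False then show ?thesis using yv cz by (simp add: hv_def vecs_def)
      qed
    qed
    have "lin_comb T n y a' = cls (\<one>, E) \<otimes>\<^bsub>T\<^esub> lin_comb T n (hv z) a'"
      using T.lin_comb_smult[OF hvv[OF zv] _ a'c, of "cls (\<one>, E)"] yeq by simp
    also have "\<dots> = cls (\<one>, E) \<otimes>\<^bsub>T\<^esub> cls (w, 0)" using hlc[OF zv] w_def by simp
    also have "\<dots> = cls (w, E)" using wc by simp
    finally have "cls (w, E) = cls (\<zero>, 0)" using yz by simp
    then obtain t :: nat where "s[^]t \<otimes> w \<otimes> s[^](0::nat) = s[^]t \<otimes> \<zero> \<otimes> s[^]E"
      using cls_eq wc by auto
    then have wt: "s[^]t \<otimes> w = \<zero>" using wc by simp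
    define x where "x = (\<lambda>i. s[^]t \<otimes> z i)"
    have xv: "x \<in> vecs R n" using vecs_smult[OF _ zv, of "s[^]t"] by (simp add: x_def)
    have "lin_comb R n x b = s[^]t \<otimes> w"
      using lin_comb_smult[OF zv _ b, of "s[^]t"] by (simp add: x_def w_def)
    then have "lin_comb R n x b = \<zero>" using wt by simp
    then have "vsmult R n s x \<in> K" using ker xv by blast
    then have "(\<lambda>i. s \<otimes> x i) \<in> vspan R n m v" using vsmult_eq[OF xv] Kv by simp
    then obtain c where c: "\<forall>j<m. c j \<in> carrier R"
      and ceq: "(\<lambda>i. s \<otimes> x i) = (\<lambda>i. if i < n then (\<Oplus>j\<in>{..<m}. c j \<otimes> v j i) else \<zero>)"
      unfolding vspan_def by blast
    define F where "F = E + (t + 1)"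
    define c' where "c' = (\<lambda>j. cls (c j, F))"
    show "y \<in> vspan T n m v'"
      unfolding vspan_def
    proof (intro CollectI exI conjI allI impI)
      fix j assume "j < m" then show "c' j \<in> carrier T" using c by (simp add: c'_def)
    next
      show "y = (\<lambda>i. if i < n then (\<Oplus>\<^bsub>T\<^esub> j\<in>{..<m}. c' j \<otimes>\<^bsub>T\<^esub> v' j i) else \<zero>\<^bsub>T\<^esub>)"
      proof
        fix i show "y i = (if i < n then (\<Oplus>\<^bsub>T\<^esub> j\<in>{..<m}. c' j \<otimes>\<^bsub>T\<^esub> v' j i) else \<zero>\<^bsub>T\<^esub>)"
        proof (cases "i < n")
          case False then show ?thesis using yv by (simp add: vecs_def)
        next
          case True
          have zc: "z i \<in> carrier R" using zv True by (simp add: vecs_def)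
          have sx: "s \<otimes> x i = (\<Oplus>j\<in>{..<m}. c j \<otimes> v j i)" using fun_cong[OF ceq, of i] True by simp
          have vc: "\<forall>j<m. v j i \<in> carrier R" using v True by (simp add: vecs_def)
          have Sc: "(\<Oplus>j\<in>{..<m}. c j \<otimes> v j i) \<in> carrier R" using c vc by (intro finsum_closed) auto
          have eqA: "z i \<otimes> s[^](t+1) = (\<Oplus>j\<in>{..<m}. c j \<otimes> v j i)"
            using zc sx by (simp add: x_def m_ac)
          have y1: "y i = cls (\<Oplus>j\<in>{..<m}. c j \<otimes> v j i, F)"
          proof -
            have "y i = cls (z i, E)" by (rule yi[OF True])
            also have "\<dots> = cls (z i \<otimes> s[^](t+1), E + (t+1))" by (rule cls_scale[OF zc, symmetric])
            finally show ?thesis using eqA by (simp add: F_def)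
          qed
          have hs: "cls (\<Oplus>j\<in>{..<m}. c j \<otimes> v j i, 0) = (\<Oplus>\<^bsub>T\<^esub> j\<in>{..<m}. cls (c j \<otimes> v j i, 0))"
            using ring_hom_cring.hom_finsum[OF h_rhc, of "\<lambda>j. c j \<otimes> v j i" "{..<m}"] c vc
            by (simp add: o_def)
          have ld: "(\<Oplus>\<^bsub>T\<^esub> j\<in>{..<m}. cls (c j \<otimes> v j i, 0)) \<otimes>\<^bsub>T\<^esub> cls (\<one>, F)
              = (\<Oplus>\<^bsub>T\<^esub> j\<in>{..<m}. cls (c j \<otimes> v j i, 0) \<otimes>\<^bsub>T\<^esub> cls (\<one>, F))"
            using c vc by (intro T.finsum_ldistr) auto
          have cg: "(\<Oplus>\<^bsub>T\<^esub> j\<in>{..<m}. cls (c j \<otimes> v j i, 0) \<otimes>\<^bsub>T\<^esub> cls (\<one>, F))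
              = (\<Oplus>\<^bsub>T\<^esub> j\<in>{..<m}. c' j \<otimes>\<^bsub>T\<^esub> v' j i)"
            using c vc True by (intro T.finsum_cong) (auto simp: c'_def v'_def hv_def simp_implies_def)
          have "y i = cls (\<Oplus>j\<in>{..<m}. c j \<otimes> v j i, 0) \<otimes>\<^bsub>T\<^esub> cls (\<one>, F)"
            using y1 Sc by simp
          also have "\<dots> = (\<Oplus>\<^bsub>T\<^esub> j\<in>{..<m}. c' j \<otimes>\<^bsub>T\<^esub> v' j i)"
            using hs ld cg by simp
          finally show ?thesis using True by simp
        qed
      qed
    qed
  qed
  show "fp_ideal T (Idl\<^bsub>T\<^esub> A)"
    unfolding fp_ideal_def fg_submodule_def
    using a'c IdlA KT v'v unfolding LT_def by blast
qed

end

theorem proposition3p14: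
  fixes R :: "('a, 'b) ring_scheme" and S :: "'a set" and s :: 'a
  assumes "cring R"
    and "multiplicative_subset R S"
    and "s \<in> S"
    and "u_S_coherent R s"
  shows "coherent_ring (localization R s)"
proof -
  have sc: "s \<in> carrier R" using assms(2,3) unfolding multiplicative_subset_def by auto
  interpret L: locs R s by (intro locs.intro locs_axioms.intro assms(1) sc)
  show ?thesis by (rule L.main[OF assms(4)])
qed

end
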